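(* Let $r\in\mathbb{R}$. For all integers $n,m,k \geq 0$ with $n \geq m+k$, \[ \binom{m+k}{m} S_{2,r}(n,m+k) = \sum_{l=m}^n \binom{n}{l} S_{2,r}(l,m)\, S_{2,r}(n-l,k). \]
   Context: For $r\in\mathbb{R}$ and integer $k\ge 0$, the extended Stirling numbers of the second kind $S_{2,r}(n,k)$ are defined by \[ \frac{1}{k!}(e^t-1+rt)^k = \sum_{n=k}^\infty S_{2,r}(n,k)\frac{t^n}{n!}, \] with $S_{2,r}(a,b)=0$ whenever $a<b$. *)

theory Defs
  imports "HOL-Computational_Algebra.Formal_Power_Series"
begin

definition S2r :: "real \<Rightarrow> nat \<Rightarrow> nat \<Rightarrow> real" where
  "S2r r n k = fact n * fps_nth (fps_const (1 / fact k) *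
      (fps_exp 1 - 1 + fps_const r * fps_X) ^ k) n"

end

theory Submission
  imports Defs
begin

lemma pow_vanish:
  fixes F :: "real fps"
  assumes "fps_nth F 0 = 0" "l < m"
  shows "fps_nth (F ^ m) l = 0"
proof (cases "F = 0")
  case True
  then show ?thesis using assms by (cases m) auto
next
  case False
  then have "subdegree F \<noteq> 0" using assms(1) by (simp add: subdegree_eq_0_iff)
  then have "l < m * subdegree F" using assms(2)
    by (metis le_less_trans less_one linorder_not_le mult.right_neutral mult_le_cancel1 not_gr_zero)
  then show ?thesis by (rule fps_pow_nth_below_subdegree)
qed

theorem theorem5:
  fixes r :: real and n m k :: nat
  assumes "n \<ge> m + k"
  shows "real ((m + k) choose m) * S2r r n (m + k) =
         (\<Sum>l = m..n. real (n choose l) * S2r r l m * S2r r (n - l) k)"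
proof -
  define F :: "real fps" where "F = fps_exp 1 - 1 + fps_const r * fps_X"
  have F0: "fps_nth F 0 = 0" by (simp add: F_def)
  define A where "A j = fps_const (1 / fact j) * F ^ j" for j
  have SA: "S2r r a j = fact a * fps_nth (A j) a" for a j
    by (simp add: S2r_def A_def F_def)
  have prod: "A m * A k = fps_const (real ((m + k) choose m)) * A (m + k)"
  proof -
    have "real ((m + k) choose m) * (1 / fact (m + k)) = 1 / (fact m * fact k)"
      using binomial_fact_lemma[of m "m+k"]
      by (simp add: field_simps flip: of_nat_mult) (metis of_nat_fact of_nat_mult)
    then have c: "fps_const (1 / fact m) * fps_const (1 / fact k) =
       fps_const (real ((m + k) choose m)) * (fps_const (1 / fact (m + k)) :: real fps)"
      by (simp only: fps_const_mult) (simp add: mult.commute)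
    have "A m * A k = (fps_const (1 / fact m) * fps_const (1 / fact k)) * F ^ (m + k)"
      by (simp add: A_def power_add algebra_simps)
    also have "\<dots> = fps_const (real ((m + k) choose m)) * A (m + k)"
      by (simp only: c A_def mult.assoc)
    finally show ?thesis .

  qed
  have "real ((m + k) choose m) * S2r r n (m + k) = fact n * fps_nth (A m * A k) n"
    by (simp add: prod SA)
  also have "\<dots> = (\<Sum>l = 0..n. fact n * (fps_nth (A m) l * fps_nth (A k) (n - l)))"
    by (simp add: fps_mult_nth sum_distrib_left)
  also have "\<dots> = (\<Sum>l = 0..n. real (n choose l) * S2r r l m * S2r r (n - l) k)"
  proof (rule sum.cong[OF refl])
    fix l assume "l \<in> {0..n}"
    then have "fact l * fact (n - l) * real (n choose l) = fact n"
      using binomial_fact_lemma[of l n] by (metis of_nat_fact of_nat_mult atLeastAtMost_iff)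
    then show "fact n * (fps_nth (A m) l * fps_nth (A k) (n - l)) = real (n choose l) * S2r r l m * S2r r (n - l) k"
      by (simp add: SA) (metis (no_types, lifting) mult.assoc mult.commute mult.left_commute)
  qed
  also have "\<dots> = (\<Sum>l = m..n. real (n choose l) * S2r r l m * S2r r (n - l) k)"
  proof -
    have z: "S2r r l m = 0" if "l < m" for l
      using pow_vanish[OF F0 that] by (simp add: SA A_def)
    have "{0..n} = {0..<m} \<union> {m..n}" using assms by auto
    then show ?thesis
      by (simp only:) (subst sum.union_disjoint, auto simp: z)
  qed
  finally show ?thesis .
qed

end
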